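(* For all integers $m\ge2$, $n\ge2$ there exists a proportional mechanism $(A,p)$ for the job scheduling problem over the set $\mathcal{N}$ of normalized instances with $m$ machines and $n$ jobs such that $\max_{i\in[m]}c_i(A(c)_i)=\mathrm{OPT}(c)$ for every $c\in\mathcal{N}$.
   Context: Notation: $[k]=\{1,\dots,k\}$. An instance is a matrix $c\in\mathbb{R}_{\ge0}^{m\times n}$; for $S\subseteq[n]$, $c_i(S)=\sum_{j\in S}c_{i,j}$. The set of normalized instances is $\mathcal{N}=\{c\in\mathbb{R}_{\ge0}^{m\times n}: \exists C \text{ with } c_i([n])=C\text{ for all } i\in[m]\}$. An allocation is a tuple $(X_1,\dots,X_m)$ of pairwise disjoint subsets of $[n]$ whose union is $[n]$. A mechanism $(A,p)$ over a set of instances $\mathcal{I}$ assigns to each $c\in\mathcal{I}$ an allocation $A(c)$ and payments $p(c)\in\mathbb{R}^m$ (written $A_i,p_i$). It is proportional if for every $c\in\mathcal{I}$ and $i\in[m]$: $c_i(A_i)-p_i\le\frac1m\sum_{j\in[m]}(c_i(A_j)-p_j)$. $\mathrm{OPT}(c)=\min_X\max_{i\in[m]}c_i(X_i)$ over all allocations $X$. *)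

theory Defs
  imports "HOL-Analysis.Analysis"
begin

text \<open>An instance is a cost matrix
  c :: nat => nat => real, where c i j is the cost of job j on machine i; entries
  outside {1..m} x {1..n} are required to be 0 so that instances correspond exactly
  to matrices in R^{m x n}.\<close>

definition cost :: "(nat \<Rightarrow> nat \<Rightarrow> real) \<Rightarrow> nat \<Rightarrow> nat set \<Rightarrow> real" where
  "cost c i S = (\<Sum>j\<in>S. c i j)"

definition is_instance :: "nat \<Rightarrow> nat \<Rightarrow> (nat \<Rightarrow> nat \<Rightarrow> real) \<Rightarrow> bool" where
  "is_instance m n c \<longleftrightarrow>
     (\<forall>i j. c i j \<ge> 0) \<and> (\<forall>i j. (i \<notin> {1..m} \<or> j \<notin> {1..n}) \<longrightarrow> c i j = 0)"

definition normalized_instances :: "nat \<Rightarrow> nat \<Rightarrow> (nat \<Rightarrow> nat \<Rightarrow> real) set" where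
  "normalized_instances m n =
     {c. is_instance m n c \<and> (\<exists>C. \<forall>i\<in>{1..m}. cost c i {1..n} = C)}"

definition is_allocation :: "nat \<Rightarrow> nat \<Rightarrow> (nat \<Rightarrow> nat set) \<Rightarrow> bool" where
  "is_allocation m n X \<longleftrightarrow>
     (\<forall>i\<in>{1..m}. \<forall>k\<in>{1..m}. i \<noteq> k \<longrightarrow> X i \<inter> X k = {}) \<and>
     (\<Union>i\<in>{1..m}. X i) = {1..n} \<and>
     (\<forall>i. i \<notin> {1..m} \<longrightarrow> X i = {})"

definition OPT :: "nat \<Rightarrow> nat \<Rightarrow> (nat \<Rightarrow> nat \<Rightarrow> real) \<Rightarrow> real" where
  "OPT m n c = (INF X\<in>{X. is_allocation m n X}. Max ((\<lambda>i. cost c i (X i)) ` {1..m}))"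

definition proportional_mechanism ::
  "nat \<Rightarrow> nat \<Rightarrow> (nat \<Rightarrow> nat \<Rightarrow> real) set \<Rightarrow>
   ((nat \<Rightarrow> nat \<Rightarrow> real) \<Rightarrow> nat \<Rightarrow> nat set) \<Rightarrow>
   ((nat \<Rightarrow> nat \<Rightarrow> real) \<Rightarrow> nat \<Rightarrow> real) \<Rightarrow> bool" where
  "proportional_mechanism m n I A p \<longleftrightarrow>
     (\<forall>c\<in>I. is_allocation m n (A c) \<and>
        (\<forall>i\<in>{1..m}. cost c i (A c i) - p c i
            \<le> (1 / real m) * (\<Sum>j\<in>{1..m}. cost c i (A c j) - p c j)))"

end

theory Submission imports Defs begin

lemma funpow_period_mult:
  assumes "(f ^^ k) x = x" shows "(f ^^ (k * l)) x = x"
proof (induction l)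
  case 0 then show ?case by simp
next
  case (Suc l)
  have "(f ^^ (k * Suc l)) x = (f ^^ k) ((f ^^ (k * l)) x)"
    by (simp add: funpow_add)
  then show ?case using assms Suc by simp
qed

lemma funpow_in:
  assumes "\<forall>x\<in>A. f x \<in> A" "x \<in> A" shows "(f ^^ t) x \<in> A"
  using assms by (induction t) auto

lemma cycle_exists:
  fixes f :: "'a \<Rightarrow> 'a"
  assumes fin: "finite A" and ne: "A \<noteq> {}" and cl: "\<forall>x\<in>A. f x \<in> A"
  shows "\<exists>P. P \<subseteq> A \<and> P \<noteq> {} \<and> f ` P = P \<and> inj_on f P"
proof -
  define P where "P = {x\<in>A. \<exists>k>0. (f ^^ k) x = x}"
  obtain a where a: "a \<in> A" using ne by blast
  define g where "g = (\<lambda>t. (f ^^ t) a)"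
  have gA: "g ` {0..card A} \<subseteq> A" using funpow_in[OF cl a] g_def by auto
  have "\<not> inj_on g {0..card A}"
  proof
    assume "inj_on g {0..card A}"
    then have "card (g ` {0..card A}) = Suc (card A)" by (simp add: card_image)
    moreover have "card (g ` {0..card A}) \<le> card A" using card_mono[OF fin gA] .
    ultimately show False by simp
  qed
  then obtain s t where st: "s \<in> {0..card A}" "t \<in> {0..card A}" "s \<noteq> t" "g s = g t"
    unfolding inj_on_def by blast
  have "\<exists>s t. s < t \<and> g s = g t"
    using st by (metis linorder_neqE_nat)
  then obtain s t where st2: "s < t" "g s = g t" by blast
  have "(f ^^ (t - s)) (g s) = g s"
    using st2 unfolding g_def by (metis funpow_add comp_apply le_add_diff_inverse2 less_imp_le)
  moreover have "g s \<in> A" using funpow_in[OF cl a] g_def by simp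
  ultimately have gsP: "g s \<in> P" unfolding P_def using st2 by (intro CollectI conjI exI[of _ "t - s"]) auto
  have PA: "P \<subseteq> A" unfolding P_def by auto
  have fP: "f ` P \<subseteq> P"
  proof
    fix y assume "y \<in> f ` P"
    then obtain x k where x: "x \<in> A" "k > 0" "(f ^^ k) x = x" "y = f x" unfolding P_def by auto
    have "(f ^^ k) (f x) = f x" using x by (metis funpow_swap1)
    then show "y \<in> P" unfolding P_def using x cl by auto
  qed
  have inj: "inj_on f P"
  proof
    fix x y assume xy: "x \<in> P" "y \<in> P" "f x = f y"
    obtain k where k: "k > 0" "(f ^^ k) x = x" using xy unfolding P_def by auto
    obtain l where l: "l > 0" "(f ^^ l) y = y" using xy unfolding P_def by auto
    have kx: "(f ^^ (k * l)) x = x" using funpow_period_mult[OF k(2)] .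
    have ly: "(f ^^ (k * l)) y = y" using funpow_period_mult[OF l(2), of k] by (simp add: mult.commute)
    obtain r where r: "k * l = Suc r" using k l by (metis gr0_conv_Suc nat_0_less_mult_iff)
    have "x = (f ^^ r) (f x)" using kx r by (metis funpow_Suc_right comp_apply)
    also have "\<dots> = (f ^^ r) (f y)" using xy by simp
    also have "\<dots> = y" using ly r by (metis funpow_Suc_right comp_apply)
    finally show "x = y" .
  qed
  have "f ` P = P" using endo_inj_surj[OF finite_subset[OF PA fin] fP inj] .
  then show ?thesis using PA gsP inj by blast
qed


definition ms :: "nat \<Rightarrow> (nat \<Rightarrow> nat \<Rightarrow> real) \<Rightarrow> (nat \<Rightarrow> nat set) \<Rightarrow> real" where
  "ms m c X = Max ((\<lambda>i. cost c i (X i)) ` {1..m})"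

definition SS :: "nat \<Rightarrow> (nat \<Rightarrow> nat \<Rightarrow> real) \<Rightarrow> (nat \<Rightarrow> nat set) \<Rightarrow> real" where
  "SS m c X = (\<Sum>i\<in>{1..m}. cost c i (X i))"

definition Opt :: "nat \<Rightarrow> nat \<Rightarrow> (nat \<Rightarrow> nat \<Rightarrow> real) \<Rightarrow> (nat \<Rightarrow> nat set) set" where
  "Opt m n c = {X. is_allocation m n X \<and> ms m c X = OPT m n c}"

lemma alloc_sub: "is_allocation m n X \<Longrightarrow> X i \<subseteq> {1..n}"
  unfolding is_allocation_def by (cases "i \<in> {1..m}") auto

lemma fin_allocs: "finite {X. is_allocation m n X}"
proof (rule finite_subset)
  show "{X. is_allocation m n X} \<subseteq> {f. \<forall>x. (x \<in> {1..m} \<longrightarrow> f x \<in> Pow {1..n}) \<and> (x \<notin> {1..m} \<longrightarrow> f x = {})}"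
    using alloc_sub by (auto simp: is_allocation_def)
  show "finite {f. \<forall>x. (x \<in> {1..m} \<longrightarrow> f x \<in> Pow {1..n}) \<and> (x \<notin> {1..m} \<longrightarrow> f x = ({}::nat set))}"
    by (rule finite_set_of_finite_funs) auto
qed

lemma alloc_ex: "1 \<le> m \<Longrightarrow> is_allocation m n (\<lambda>i. if i = 1 then {1..n} else {})"
  unfolding is_allocation_def by auto

lemma partition_cost:
  assumes "is_allocation m n X"
  shows "cost c k {1..n} = (\<Sum>j\<in>{1..m}. cost c k (X j))"
proof -
  have U: "{1..n} = \<Union>(X ` {1..m})" using assms unfolding is_allocation_def by auto
  have "sum (c k) (\<Union>(X ` {1..m})) = (\<Sum>j\<in>{1..m}. sum (c k) (X j))"
    apply (rule sum.UNION_disjoint)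
      apply simp
    using alloc_sub[OF assms] apply (meson finite_atLeastAtMost finite_subset)
    using assms unfolding is_allocation_def by blast
  then show ?thesis unfolding cost_def using U by simp
qed

lemma OPT_min: "1 \<le> m \<Longrightarrow> OPT m n c = Min (ms m c ` {X. is_allocation m n X})"
  unfolding OPT_def ms_def[abs_def]
  apply (rule cInf_eq_Min)
  using fin_allocs apply simp
  using alloc_ex[of m n] by blast

lemma OPT_le: "1 \<le> m \<Longrightarrow> is_allocation m n X \<Longrightarrow> OPT m n c \<le> ms m c X"
  using OPT_min fin_allocs by simp

lemma Opt_fin_ne: "1 \<le> m \<Longrightarrow> finite (Opt m n c) \<and> Opt m n c \<noteq> {}"
proof -
  assume m: "1 \<le> m"
  have "OPT m n c \<in> ms m c ` {X. is_allocation m n X}"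
    unfolding OPT_min[OF m] using fin_allocs alloc_ex[OF m] by (intro Min_in) auto
  then have "Opt m n c \<noteq> {}" unfolding Opt_def by auto
  moreover have "finite (Opt m n c)" unfolding Opt_def using fin_allocs by (rule finite_subset[rotated]) auto
  ultimately show ?thesis by simp
qed

lemma best_ex: "1 \<le> m \<Longrightarrow> \<exists>X\<in>Opt m n c. \<forall>Y\<in>Opt m n c. SS m c X \<le> SS m c Y"
proof -
  assume m: "1 \<le> m"
  note fn = Opt_fin_ne[OF m, of n c]
  have "Min (SS m c ` Opt m n c) \<in> SS m c ` Opt m n c" using fn by (intro Min_in) auto
  then obtain X where X: "X \<in> Opt m n c" "SS m c X = Min (SS m c ` Opt m n c)" by auto
  then show ?thesis using fn by (intro bexI[of _ X]) auto
qed

lemma sink: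
  assumes m: "1 \<le> m" and X: "X \<in> Opt m n c" and best: "\<forall>Y\<in>Opt m n c. SS m c X \<le> SS m c Y"
  shows "\<exists>k\<in>{1..m}. \<forall>j\<in>{1..m}. cost c j (X j) \<le> cost c k (X j)"
proof (rule ccontr)
  assume "\<not> ?thesis"
  then have "\<forall>k\<in>{1..m}. \<exists>j\<in>{1..m}. cost c k (X j) < cost c j (X j)" by (auto simp: not_le)
  then obtain f where f: "\<forall>k\<in>{1..m}. f k \<in> {1..m} \<and> cost c k (X (f k)) < cost c (f k) (X (f k))"
    by metis
  obtain P where P: "P \<subseteq> {1..m}" "P \<noteq> {}" "f ` P = P" "inj_on f P"
    using cycle_exists[of "{1..m}" f] f m by auto
  define \<sigma> where "\<sigma> x = (if x \<in> P then f x else x)" for x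
  have inj: "inj_on \<sigma> {1..m}"
  proof
    fix x y assume xy: "x \<in> {1..m}" "y \<in> {1..m}" "\<sigma> x = \<sigma> y"
    show "x = y"
    proof (cases "x \<in> P"; cases "y \<in> P")
      assume "x \<in> P" "y \<in> P" then show ?thesis using xy P(4) unfolding \<sigma>_def inj_on_def by auto
    next
      assume "x \<in> P" "y \<notin> P" then show ?thesis using xy P(3) unfolding \<sigma>_def by auto
    next
      assume "x \<notin> P" "y \<in> P" then show ?thesis using xy P(3) unfolding \<sigma>_def by auto
    next
      assume "x \<notin> P" "y \<notin> P" then show ?thesis using xy unfolding \<sigma>_def by auto
    qed
  qed
  have sub: "\<sigma> ` {1..m} \<subseteq> {1..m}" using f unfolding \<sigma>_def by auto
  have img: "\<sigma> ` {1..m} = {1..m}" using endo_inj_surj[OF _ sub inj] by simp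
  have bij: "bij_betw \<sigma> {1..m} {1..m}" using inj img by (simp add: bij_betw_def)
  define Y where "Y i = X (\<sigma> i)" for i
  have Xa: "is_allocation m n X" and Xo: "ms m c X = OPT m n c" using X unfolding Opt_def by auto
  have Ya: "is_allocation m n Y"
  proof -
    have d: "\<forall>i\<in>{1..m}. \<forall>k\<in>{1..m}. i \<noteq> k \<longrightarrow> Y i \<inter> Y k = {}"
    proof (intro ballI impI)
      fix i k assume ik: "i \<in> {1..m}" "k \<in> {1..m}" "i \<noteq> k"
      then have "\<sigma> i \<noteq> \<sigma> k" using inj unfolding inj_on_def by blast
      moreover have "\<sigma> i \<in> {1..m}" "\<sigma> k \<in> {1..m}" using ik(1,2) sub by blast+
      ultimately show "Y i \<inter> Y k = {}" using Xa unfolding is_allocation_def Y_def by blast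
    qed
    have "(\<Union>i\<in>{1..m}. Y i) = (\<Union>j\<in>\<sigma> ` {1..m}. X j)" unfolding Y_def by auto
    also have "\<dots> = {1..n}" using img Xa unfolding is_allocation_def by simp
    finally have u: "(\<Union>i\<in>{1..m}. Y i) = {1..n}" .
    have o: "\<forall>i. i \<notin> {1..m} \<longrightarrow> Y i = {}" using P(1) Xa unfolding Y_def \<sigma>_def is_allocation_def by auto
    show ?thesis using d u o unfolding is_allocation_def by blast
  qed
  have le: "\<forall>i\<in>{1..m}. cost c i (Y i) \<le> cost c (\<sigma> i) (X (\<sigma> i))"
    using f unfolding Y_def \<sigma>_def by (auto intro: less_imp_le)
  have lt: "\<exists>i\<in>{1..m}. cost c i (Y i) < cost c (\<sigma> i) (X (\<sigma> i))"
  proof -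
    obtain i where "i \<in> P" using P(2) by auto
    then show ?thesis using f P(1) unfolding Y_def \<sigma>_def by (intro bexI[of _ i]) auto
  qed
  have "ms m c Y \<le> ms m c X"
    unfolding ms_def
  proof (rule Max.boundedI)
    show "finite ((\<lambda>i. cost c i (Y i)) ` {1..m})" by simp
    show "(\<lambda>i. cost c i (Y i)) ` {1..m} \<noteq> {}" using m by auto
    fix a assume "a \<in> (\<lambda>i. cost c i (Y i)) ` {1..m}"
    then obtain i where i: "i \<in> {1..m}" "a = cost c i (Y i)" by auto
    have si: "\<sigma> i \<in> {1..m}" using sub i(1) by blast
    then have "cost c (\<sigma> i) (X (\<sigma> i)) \<in> (\<lambda>i. cost c i (X i)) ` {1..m}" by blast
    then have "cost c (\<sigma> i) (X (\<sigma> i)) \<le> Max ((\<lambda>i. cost c i (X i)) ` {1..m})"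
      by (intro Max_ge) simp_all
    then show "a \<le> Max ((\<lambda>i. cost c i (X i)) ` {1..m})" using le i by force
  qed
  then have "Y \<in> Opt m n c" using OPT_le[OF m Ya, of c] Xo Ya unfolding Opt_def by auto
  then have "SS m c X \<le> SS m c Y" using best by auto
  moreover have "SS m c Y < SS m c X"
  proof -
    have "SS m c Y < (\<Sum>i\<in>{1..m}. cost c (\<sigma> i) (X (\<sigma> i)))"
      unfolding SS_def using le lt by (intro sum_strict_mono_ex1) (simp_all only: finite_atLeastAtMost)
    also have "\<dots> = SS m c X" unfolding SS_def using sum.reindex_bij_betw[OF bij, of "\<lambda>j. cost c j (X j)"] .
    finally show ?thesis .
  qed
  ultimately show False by simp
qed

theorem theorem3:
  fixes m n :: nat
  assumes "m \<ge> 2" and "n \<ge> 2"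
  shows "\<exists>A p. proportional_mechanism m n (normalized_instances m n) A p \<and>
           (\<forall>c\<in>normalized_instances m n.
              Max ((\<lambda>i. cost c i (A c i)) ` {1..m}) = OPT m n c)"
proof -
  have m: "1 \<le> m" using assms by simp
  define A where "A c = (SOME X. X \<in> Opt m n c \<and> (\<forall>Y\<in>Opt m n c. SS m c X \<le> SS m c Y))" for c
  define p where "p c i = cost c i (A c i) - cost c 1 {1..n} / real m" for c i
  have Ac: "A c \<in> Opt m n c \<and> (\<forall>Y\<in>Opt m n c. SS m c (A c) \<le> SS m c Y)" for c
  proof -
    have ex: "\<exists>X. X \<in> Opt m n c \<and> (\<forall>Y\<in>Opt m n c. SS m c X \<le> SS m c Y)"
      using best_ex[OF m, of n c] by blast
    show ?thesis unfolding A_def by (rule someI_ex[OF ex])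
  qed
  have main: "is_allocation m n (A c) \<and>
        (\<forall>i\<in>{1..m}. cost c i (A c i) - p c i
            \<le> (1 / real m) * (\<Sum>j\<in>{1..m}. cost c i (A c j) - p c j))"
    if cN: "c \<in> normalized_instances m n" for c
  proof -
    obtain C where C: "\<forall>i\<in>{1..m}. cost c i {1..n} = C" using cN unfolding normalized_instances_def by auto
    have C1: "cost c 1 {1..n} = C" using C m by auto
    have Aa: "is_allocation m n (A c)" using Ac[of c] unfolding Opt_def by auto
    obtain k where k: "k \<in> {1..m}" "\<forall>j\<in>{1..m}. cost c j (A c j) \<le> cost c k (A c j)"
      using sink[OF m] Ac[of c] by blast
    have SC: "SS m c (A c) \<le> C"
    proof -
      have "SS m c (A c) \<le> (\<Sum>j\<in>{1..m}. cost c k (A c j))" unfolding SS_def using k(2) by (intro sum_mono) auto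
      also have "\<dots> = C" using partition_cost[OF Aa, of c k] C k(1) by simp
      finally show ?thesis .
    qed
    have mpos: "real m > 0" using m by simp
    show ?thesis
    proof (intro conjI ballI Aa)
      fix i assume i: "i \<in> {1..m}"
      have "(\<Sum>j\<in>{1..m}. cost c i (A c j) - p c j) = (\<Sum>j\<in>{1..m}. cost c i (A c j)) - (\<Sum>j\<in>{1..m}. p c j)"
        by (simp add: sum_subtractf)
      also have "(\<Sum>j\<in>{1..m}. cost c i (A c j)) = C" using partition_cost[OF Aa, of c i] C i by simp
      also have "(\<Sum>j\<in>{1..m}. p c j) = SS m c (A c) - real m * (C / real m)"
        unfolding p_def SS_def C1 by (simp add: sum_subtractf)
      also have "real m * (C / real m) = C" using mpos by simp
      finally have eq: "(\<Sum>j\<in>{1..m}. cost c i (A c j) - p c j) = 2 * C - SS m c (A c)" by simp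
      have lhs: "cost c i (A c i) - p c i = C / real m" unfolding p_def C1 by simp
      show "cost c i (A c i) - p c i \<le> (1 / real m) * (\<Sum>j\<in>{1..m}. cost c i (A c j) - p c j)"
        unfolding eq lhs using SC mpos by (simp add: divide_right_mono)
    qed
  qed
  show ?thesis
  proof (intro exI conjI)
    show "proportional_mechanism m n (normalized_instances m n) A p"
      unfolding proportional_mechanism_def using main by blast
    show "\<forall>c\<in>normalized_instances m n. Max ((\<lambda>i. cost c i (A c i)) ` {1..m}) = OPT m n c"
      using Ac unfolding Opt_def ms_def by blast
  qed
qed

end
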